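(* Let $M$ be a complex manifold, $\mathcal U=\{U_0,U_1\}$ an open covering, $U_{01}=U_0\cap U_1$. (1) The map $\mathcal E^{p,q}_{\rm A}(\mathcal U)\to\mathcal E^{p+1,q}(\mathcal U)$, $(\xi_0,\xi_1,\xi^{(1)}_{01},\xi^{(2)}_{01})\mapsto(\partial\xi_0,\partial\xi_1,-\partial\xi^{(1)}_{01})$, induces a homomorphism $\partial:H^{p,q}_{\rm A}(\mathcal U)\to H^{p+1,q}_{\bar\vartheta}(\mathcal U)$, which is compatible, via the isomorphisms $H^{p,q}_{\rm A}(M)\cong H^{p,q}_{\rm A}(\mathcal U)$ (induced by $\omega\mapsto(\omega,\omega,0,0)$) and $H^{p+1,q}_{\bar\partial}(M)\cong H^{p+1,q}_{\bar\vartheta}(\mathcal U)$ (induced by $\omega\mapsto(\omega,\omega,0)$), with the homomorphism $\partial:H^{p,q}_{\rm A}(M)\to H^{p+1,q}_{\bar\partial}(M)$, $[\omega]\mapsto[\partial\omega]$. (2) If $S\subset M$ is closed, $U_0=M\setminus S$ and $U_1\supset S$, the map $\mathcal E^{p,q}_{\rm A}(\mathcal U,U_0)\to\mathcal E^{p+1,q}(\mathcal U,U_0)$, $(\xi_1,\xi^{(1)}_{01},\xi^{(2)}_{01})\mapsto(\partial\xi_1,-\partial\xi^{(1)}_{01})$, induces a homomorphism $\partial:H^{p,q}_{\rm A}(\mathcal U,U_0)\to H^{p+1,q}_{\bar\vartheta}(\mathcal U,U_0)$.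
   Context: $\mathcal E^{a,b}$ is the sheaf of $C^\infty$ $(a,b)$-forms, $d=\partial+\bar\partial$. Čech–Aeppli complex of type $(p,q)$: cochains $\xi=(\xi_0,\xi_1,\xi^{(1)}_{01},\xi^{(2)}_{01})\in\mathcal E^{p,q}_{\rm A}(\mathcal U)=\mathcal E^{p,q}(U_0)\oplus\mathcal E^{p,q}(U_1)\oplus\mathcal E^{p,q-1}(U_{01})\oplus\mathcal E^{p-1,q}(U_{01})$; cocycles: $\bar\partial\partial\xi_0=\bar\partial\partial\xi_1=0$, $\xi_1-\xi_0-\bar\partial\xi^{(1)}_{01}-\partial\xi^{(2)}_{01}=0$; coboundaries: $\xi_i=\bar\partial\eta_i^{(1)}+\partial\eta_i^{(2)}$, $\xi^{(1)}_{01}=\eta_1^{(1)}-\eta_0^{(1)}-\partial\eta_{01}$, $\xi^{(2)}_{01}=\eta_1^{(2)}-\eta_0^{(2)}-\bar\partial\eta_{01}$ with $\eta_i^{(1)}\in\mathcal E^{p,q-1}(U_i)$, $\eta_i^{(2)}\in\mathcal E^{p-1,q}(U_i)$, $\eta_{01}\in\mathcal E^{p-1,q-1}(U_{01})$; $H^{p,q}_{\rm A}(\mathcal U)$ is the quotient. Relative version: cochains with $\xi_0=0$, i.e. $(\xi_1,\xi^{(1)}_{01},\xi^{(2)}_{01})$; cocycles $\bar\partial\partial\xi_1=0$, $\xi_1-\bar\partial\xi^{(1)}_{01}-\partial\xi^{(2)}_{01}=0$; coboundaries are images of $(\chi_1,\chi_{01})\in(\mathcal E^{p,q-1}\oplus\mathcal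 E^{p-1,q})(U_1)\oplus(\mathcal E^{p,q-2}\oplus\mathcal E^{p-1,q-1}\oplus\mathcal E^{p-2,q})$-type data under the relative differential $(\chi_1,\chi_{01})\mapsto(\bar\partial\chi_1^{(1)}+\partial\chi_1^{(2)},\chi_1-d\chi_{01})$ where $\chi_{01}\in\mathcal E^{(p-1,q-1)+1}$-level degree is as in the general construction: for a complex $K^\bullet$, $K^r(\mathcal U,U_0)=K^r(U_1)\oplus K^{r-1}(U_{01})$, $D(\sigma_1,\sigma_{01})=(d_K\sigma_1,\sigma_1-d_K\sigma_{01})$, applied to the complex $\cdots\to\mathcal E^{p-1,q-1}\xrightarrow{d}\mathcal E^{p,q-1}\oplus\mathcal E^{p-1,q}\xrightarrow{(\alpha,\beta)\mapsto\bar\partial\alpha+\partial\beta}\mathcal E^{p,q}\xrightarrow{\bar\partial\partial}\mathcal E^{p+1,q+1}$ with $d\omega=(\partial\omega,\bar\partial\omega)$. Čech–Dolbeault complex: $\mathcal E^{a,b}(\mathcal U)=\mathcal E^{a,b}(U_0)\oplus\mathcal E^{a,b}(U_1)\oplus\mathcal E^{a,b-1}(U_{01})$, $\bar\vartheta(\sigma_0,\sigma_1,\sigma_{01})=(\bar\partial\sigma_0,\bar\partial\sigma_1,\sigma_1-\sigma_0-\bar\partial\sigma_{01})$, cohomology $H^{a,b}_{\bar\vartheta}(\mathcal U)$; relative subcomplex with first component zero, cohomology $H^{a,b}_{\bar\vartheta}(\mathcal U,U_0)$. $H^{p,q}_{\rm A}(M)=\ker\bar\partial\partial/(\operatorname{Im}\bar\partial+\operatorname{Im}\partial)$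 on $\mathcal E^{p,q}(M)$. *)

theory Defs
  imports "HOL-Analysis.Analysis"
begin

text \<open>Abstract model of the sheaf of smooth (a,b)-forms on a complex manifold M
  (the manifold is the topological space UNIV).  E V a b is the group of (a,b)-forms
  on the open set V (E V a b = {0} for negative degrees), res V W is restriction
  from V to W, del and dbar are the operators with d = del + dbar.\<close>

definition forms_structure ::
  "('x::topological_space set \<Rightarrow> int \<Rightarrow> int \<Rightarrow> 'f::ab_group_add set)
   \<Rightarrow> ('x set \<Rightarrow> 'x set \<Rightarrow> 'f \<Rightarrow> 'f) \<Rightarrow> ('f \<Rightarrow> 'f) \<Rightarrow> ('f \<Rightarrow> 'f) \<Rightarrow> bool" where
  "forms_structure E res del dbar \<longleftrightarrow>
     (\<forall>V a b. 0 \<in> E V a b \<and> (\<forall>x\<in>E V a b. \<forall>y\<in>E V a b. x + y \<in> E V a b \<and> - x \<in> E V a b)) \<and>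
     (\<forall>V a b. (a < 0 \<or> b < 0) \<longrightarrow> E V a b = {0}) \<and>
     (\<forall>V a b. \<forall>x\<in>E V a b. del x \<in> E V (a + 1) b \<and> dbar x \<in> E V a (b + 1)) \<and>
     (\<forall>x y. del (x + y) = del x + del y \<and> dbar (x + y) = dbar x + dbar y) \<and>
     (\<forall>x. del (del x) = 0 \<and> dbar (dbar x) = 0 \<and> del (dbar x) = - dbar (del x)) \<and>
     (\<forall>V W a b. W \<subseteq> V \<longrightarrow> (\<forall>x\<in>E V a b.
         res V W x \<in> E W a b \<and> del (res V W x) = res V W (del x)
         \<and> dbar (res V W x) = res V W (dbar x))) \<and>
     (\<forall>V W x y. res V W (x + y) = res V W x + res V W y) \<and>
     (\<forall>V W Z a b. Z \<subseteq> W \<and> W \<subseteq> V \<longrightarrow> (\<forall>x\<in>E V a b. res W Z (res V W x) = res V Z x))"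

text \<open>A map f induces a homomorphism on the quotients Z/B -> Z'/B'.\<close>
definition induces_hom :: "('a::ab_group_add \<Rightarrow> 'b::ab_group_add) \<Rightarrow> 'a set \<Rightarrow> 'a set \<Rightarrow> 'b set \<Rightarrow> 'b set \<Rightarrow> bool" where
  "induces_hom f Z B Z' B' \<longleftrightarrow> f ` Z \<subseteq> Z' \<and> f ` B \<subseteq> B' \<and> (\<forall>x\<in>Z. \<forall>y\<in>Z. f (x + y) = f x + f y)"

definition A_cocycles where
  "A_cocycles E res del dbar U0 U1 p q =
     {(x0, x1, y1, y2). x0 \<in> E U0 p q \<and> x1 \<in> E U1 p q \<and> y1 \<in> E (U0 \<inter> U1) p (q - 1)
        \<and> y2 \<in> E (U0 \<inter> U1) (p - 1) q \<and> dbar (del x0) = 0 \<and> dbar (del x1) = 0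
        \<and> res U1 (U0 \<inter> U1) x1 - res U0 (U0 \<inter> U1) x0 - dbar y1 - del y2 = 0}"

definition A_coboundaries where
  "A_coboundaries E res del dbar U0 U1 p q =
     {(dbar a0 + del b0, dbar a1 + del b1,
       res U1 (U0 \<inter> U1) a1 - res U0 (U0 \<inter> U1) a0 - del h,
       res U1 (U0 \<inter> U1) b1 - res U0 (U0 \<inter> U1) b0 - dbar h) | a0 b0 a1 b1 h.
       a0 \<in> E U0 p (q - 1) \<and> b0 \<in> E U0 (p - 1) q \<and> a1 \<in> E U1 p (q - 1)
       \<and> b1 \<in> E U1 (p - 1) q \<and> h \<in> E (U0 \<inter> U1) (p - 1) (q - 1)}"

text \<open>Relative version (cochains with xi_0 = 0).\<close>
definition A_rel_cocycles where
  "A_rel_cocycles E res del dbar U0 U1 p q =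
     {(x1, y1, y2). x1 \<in> E U1 p q \<and> y1 \<in> E (U0 \<inter> U1) p (q - 1)
        \<and> y2 \<in> E (U0 \<inter> U1) (p - 1) q \<and> dbar (del x1) = 0
        \<and> res U1 (U0 \<inter> U1) x1 - dbar y1 - del y2 = 0}"

definition A_rel_coboundaries where
  "A_rel_coboundaries E res del dbar U0 U1 p q =
     {(dbar a1 + del b1, res U1 (U0 \<inter> U1) a1 - del h, res U1 (U0 \<inter> U1) b1 - dbar h) | a1 b1 h.
       a1 \<in> E U1 p (q - 1) \<and> b1 \<in> E U1 (p - 1) q \<and> h \<in> E (U0 \<inter> U1) (p - 1) (q - 1)}"

definition D_cocycles where
  "D_cocycles E res dbar U0 U1 a b =
     {(s0, s1, s01). s0 \<in> E U0 a b \<and> s1 \<in> E U1 a b \<and> s01 \<in> E (U0 \<inter> U1) a (b - 1)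
        \<and> dbar s0 = 0 \<and> dbar s1 = 0
        \<and> res U1 (U0 \<inter> U1) s1 - res U0 (U0 \<inter> U1) s0 - dbar s01 = 0}"

definition D_coboundaries where
  "D_coboundaries E res dbar U0 U1 a b =
     {(dbar t0, dbar t1, res U1 (U0 \<inter> U1) t1 - res U0 (U0 \<inter> U1) t0 - dbar t01) | t0 t1 t01.
       t0 \<in> E U0 a (b - 1) \<and> t1 \<in> E U1 a (b - 1) \<and> t01 \<in> E (U0 \<inter> U1) a (b - 2)}"

definition D_rel_cocycles where
  "D_rel_cocycles E res dbar U0 U1 a b =
     {(s1, s01). s1 \<in> E U1 a b \<and> s01 \<in> E (U0 \<inter> U1) a (b - 1)
        \<and> dbar s1 = 0 \<and> res U1 (U0 \<inter> U1) s1 - dbar s01 = 0}"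

definition D_rel_coboundaries where
  "D_rel_coboundaries E res dbar U0 U1 a b =
     {(dbar t1, res U1 (U0 \<inter> U1) t1 - dbar t01) | t1 t01.
       t1 \<in> E U1 a (b - 1) \<and> t01 \<in> E (U0 \<inter> U1) a (b - 2)}"

definition A_ker where
  "A_ker E del dbar p q = {w \<in> E UNIV p q. dbar (del w) = 0}"

definition A_im where
  "A_im E del dbar p q = {dbar a + del b | a b. a \<in> E UNIV p (q - 1) \<and> b \<in> E UNIV (p - 1) q}"

definition Dol_ker where
  "Dol_ker E dbar a b = {w \<in> E UNIV a b. dbar w = 0}"

definition Dol_im where
  "Dol_im E dbar a b = dbar ` E UNIV a (b - 1)"

end

theory Submission
  imports Defs
begin


lemma fs_facts:
  assumes "forms_structure E res del dbar"
  shows "\<And>V a b. 0 \<in> E V a b"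
    and "\<And>V a b x y. x \<in> E V a b \<Longrightarrow> y \<in> E V a b \<Longrightarrow> x - y \<in> E V a b"
    and "\<And>V a b x. x \<in> E V a b \<Longrightarrow> - x \<in> E V a b"
    and "\<And>V a b x. x \<in> E V a b \<Longrightarrow> del x \<in> E V (a + 1) b"
    and "\<And>V a b x. x \<in> E V a b \<Longrightarrow> dbar x \<in> E V a (b + 1)"
    and "\<And>x y. del (x + y) = del x + del y" and "\<And>x y. dbar (x + y) = dbar x + dbar y"
    and "\<And>x y. del (x - y) = del x - del y" and "\<And>x y. dbar (x - y) = dbar x - dbar y"
    and "\<And>x. del (- x) = - del x" and "\<And>x. dbar (- x) = - dbar x"
    and "del 0 = 0" and "dbar 0 = 0"
    and "\<And>x. del (del x) = 0" and "\<And>x. dbar (dbar x) = 0" and "\<And>x. del (dbar x) = - dbar (del x)"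
    and "\<And>V W a b x. W \<subseteq> V \<Longrightarrow> x \<in> E V a b \<Longrightarrow> del (res V W x) = res V W (del x)"
    and "\<And>V W a b x. W \<subseteq> V \<Longrightarrow> x \<in> E V a b \<Longrightarrow> dbar (res V W x) = res V W (dbar x)"
    and "\<And>V W a b x. W \<subseteq> V \<Longrightarrow> x \<in> E V a b \<Longrightarrow> res V W x \<in> E W a b"
    and "\<And>V W x y. res V W (x + y) = res V W x + res V W y"
    and "\<And>V W x y. res V W (x - y) = res V W x - res V W y"
    and "\<And>V W x. res V W (- x) = - res V W x"
    and "\<And>V W. res V W 0 = 0"
proof -
  obtain c1 c2 c3 c4 c5 c6 c7 c8 where
    c1: "\<forall>V a b. 0 \<in> E V a b \<and> (\<forall>x\<in>E V a b. \<forall>y\<in>E V a b. x + y \<in> E V a b \<and> - x \<in> E V a b)"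
    and c3: "\<forall>V a b. \<forall>x\<in>E V a b. del x \<in> E V (a + 1) b \<and> dbar x \<in> E V a (b + 1)"
    and c4: "\<forall>x y. del (x + y) = del x + del y \<and> dbar (x + y) = dbar x + dbar y"
    and c5: "\<forall>x. del (del x) = 0 \<and> dbar (dbar x) = 0 \<and> del (dbar x) = - dbar (del x)"
    and c6: "\<forall>V W a b. W \<subseteq> V \<longrightarrow> (\<forall>x\<in>E V a b.
         res V W x \<in> E W a b \<and> del (res V W x) = res V W (del x)
         \<and> dbar (res V W x) = res V W (dbar x))"
    and c7: "\<forall>V W x y. res V W (x + y) = res V W x + res V W y"
    using assms unfolding forms_structure_def by (elim conjE) (rule that)
  have dadd: "\<And>x y. del (x + y) = del x + del y" "\<And>x y. dbar (x + y) = dbar x + dbar y"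
    and radd: "\<And>V W x y. res V W (x + y) = res V W x + res V W y" using c4 c7 by auto
  have d0: "del 0 = 0" using dadd(1)[of 0 0] by simp
  have db0: "dbar 0 = 0" using dadd(2)[of 0 0] by simp
  have r0: "\<And>V W. res V W 0 = 0" using radd by (metis add_cancel_right_right)
  have dn: "\<And>x. del (- x) = - del x" using dadd(1) d0 by (metis add.right_inverse add_eq_0_iff2)
  have dbn: "\<And>x. dbar (- x) = - dbar x" using dadd(2) db0 by (metis add.right_inverse add_eq_0_iff2)
  have rn: "\<And>V W x. res V W (- x) = - res V W x" using radd r0 by (metis add.right_inverse add_eq_0_iff2)
  show "\<And>V a b. 0 \<in> E V a b" using c1 by auto
  show "\<And>V a b x y. x \<in> E V a b \<Longrightarrow> y \<in> E V a b \<Longrightarrow> x - y \<in> E V a b"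
    using c1 by (metis diff_conv_add_uminus)
  show "\<And>V a b x. x \<in> E V a b \<Longrightarrow> - x \<in> E V a b" using c1 by auto
  show "\<And>V a b x. x \<in> E V a b \<Longrightarrow> del x \<in> E V (a + 1) b" using c3 by auto
  show "\<And>V a b x. x \<in> E V a b \<Longrightarrow> dbar x \<in> E V a (b + 1)" using c3 by auto
  show "\<And>x y. del (x + y) = del x + del y" "\<And>x y. dbar (x + y) = dbar x + dbar y" by (fact dadd)+
  show "\<And>x y. del (x - y) = del x - del y" using dadd dn by (metis diff_conv_add_uminus)
  show "\<And>x y. dbar (x - y) = dbar x - dbar y" using dadd dbn by (metis diff_conv_add_uminus)
  show "\<And>x. del (- x) = - del x" "\<And>x. dbar (- x) = - dbar x" by (fact dn dbn)+
  show "del 0 = 0" "dbar 0 = 0" by (fact d0 db0)+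
  show "\<And>x. del (del x) = 0" "\<And>x. dbar (dbar x) = 0" "\<And>x. del (dbar x) = - dbar (del x)" using c5 by auto
  show "\<And>V W a b x. W \<subseteq> V \<Longrightarrow> x \<in> E V a b \<Longrightarrow> del (res V W x) = res V W (del x)" using c6 by blast
  show "\<And>V W a b x. W \<subseteq> V \<Longrightarrow> x \<in> E V a b \<Longrightarrow> dbar (res V W x) = res V W (dbar x)" using c6 by blast
  show "\<And>V W a b x. W \<subseteq> V \<Longrightarrow> x \<in> E V a b \<Longrightarrow> res V W x \<in> E W a b" using c6 by blast
  show "\<And>V W x y. res V W (x + y) = res V W x + res V W y" by (fact radd)
  show "\<And>V W x y. res V W (x - y) = res V W x - res V W y" using radd rn by (metis diff_conv_add_uminus)
  show "\<And>V W x. res V W (- x) = - res V W x" by (fact rn)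
  show "\<And>V W. res V W 0 = 0" by (fact r0)
qed

theorem proposition3p26:
  fixes E :: "'x::topological_space set \<Rightarrow> int \<Rightarrow> int \<Rightarrow> 'f::ab_group_add set"
    and res :: "'x set \<Rightarrow> 'x set \<Rightarrow> 'f \<Rightarrow> 'f"
    and del dbar :: "'f \<Rightarrow> 'f"
    and U0 U1 :: "'x set"
    and p q :: int
  assumes "forms_structure E res del dbar"
    and "open U0" and "open U1" and "U0 \<union> U1 = UNIV"
  shows
    "induces_hom (\<lambda>(x0, x1, y1, y2). (del x0, del x1, - del y1))
        (A_cocycles E res del dbar U0 U1 p q) (A_coboundaries E res del dbar U0 U1 p q)
        (D_cocycles E res dbar U0 U1 (p + 1) q) (D_coboundaries E res dbar U0 U1 (p + 1) q)
     \<and> induces_hom del (A_ker E del dbar p q) (A_im E del dbar p q)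
        (Dol_ker E dbar (p + 1) q) (Dol_im E dbar (p + 1) q)
     \<and> (\<forall>w \<in> A_ker E del dbar p q.
          (\<lambda>(x0, x1, y1, y2). (del x0, del x1, - del y1))
             (res UNIV U0 w, res UNIV U1 w, 0, 0::'f)
          - (res UNIV U0 (del w), res UNIV U1 (del w), 0)
          \<in> D_coboundaries E res dbar U0 U1 (p + 1) q)
     \<and> (\<forall>S. closed S \<and> U0 = UNIV - S \<and> S \<subseteq> U1 \<longrightarrow>
          induces_hom (\<lambda>(x1, y1, y2). (del x1, - del y1))
            (A_rel_cocycles E res del dbar U0 U1 p q) (A_rel_coboundaries E res del dbar U0 U1 p q)
            (D_rel_cocycles E res dbar U0 U1 (p + 1) q) (D_rel_coboundaries E res dbar U0 U1 (p + 1) q))"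
proof -
  note F = fs_facts[OF assms(1)]
  have sub0: "U0 \<inter> U1 \<subseteq> U0" and sub1: "U0 \<inter> U1 \<subseteq> U1" by auto
  have P1: "induces_hom (\<lambda>(x0, x1, y1, y2). (del x0, del x1, - del y1))
        (A_cocycles E res del dbar U0 U1 p q) (A_coboundaries E res del dbar U0 U1 p q)
        (D_cocycles E res dbar U0 U1 (p + 1) q) (D_coboundaries E res dbar U0 U1 (p + 1) q)"
    unfolding induces_hom_def
  proof (intro conjI ballI subsetI)
    fix z assume "z \<in> (\<lambda>(x0, x1, y1, y2). (del x0, del x1, - del y1)) ` A_cocycles E res del dbar U0 U1 p q"
    then obtain x0 x1 y1 y2 where z: "z = (del x0, del x1, - del y1)"
      and h: "x0 \<in> E U0 p q" "x1 \<in> E U1 p q" "y1 \<in> E (U0 \<inter> U1) p (q - 1)"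
        "y2 \<in> E (U0 \<inter> U1) (p - 1) q" "dbar (del x0) = 0" "dbar (del x1) = 0"
        "res U1 (U0 \<inter> U1) x1 - res U0 (U0 \<inter> U1) x0 - dbar y1 - del y2 = 0"
      unfolding A_cocycles_def by auto
    have e: "res U1 (U0 \<inter> U1) x1 - res U0 (U0 \<inter> U1) x0 = dbar y1 + del y2" using h(7)
      by (simp add: algebra_simps)
    have "res U1 (U0 \<inter> U1) (del x1) - res U0 (U0 \<inter> U1) (del x0) - dbar (- del y1)
        = del (res U1 (U0 \<inter> U1) x1 - res U0 (U0 \<inter> U1) x0) + dbar (del y1)"
      using F(17)[OF sub1 h(2)] F(17)[OF sub0 h(1)] F(8) F(11) by simp
    also have "\<dots> = 0" unfolding e using F(6) F(14) F(16) by simp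
    finally show "z \<in> D_cocycles E res dbar U0 U1 (p + 1) q"
      unfolding z D_cocycles_def using h F(3,4) by auto
  next
    fix z assume "z \<in> (\<lambda>(x0, x1, y1, y2). (del x0, del x1, - del y1)) ` A_coboundaries E res del dbar U0 U1 p q"
    then obtain a0 b0 a1 b1 h where z: "z = (del (dbar a0 + del b0), del (dbar a1 + del b1),
         - del (res U1 (U0 \<inter> U1) a1 - res U0 (U0 \<inter> U1) a0 - del h))"
      and h: "a0 \<in> E U0 p (q - 1)" "b0 \<in> E U0 (p - 1) q" "a1 \<in> E U1 p (q - 1)"
       "b1 \<in> E U1 (p - 1) q" "h \<in> E (U0 \<inter> U1) (p - 1) (q - 1)"
      unfolding A_coboundaries_def by auto
    have "z = (dbar (- del a0), dbar (- del a1),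
        res U1 (U0 \<inter> U1) (- del a1) - res U0 (U0 \<inter> U1) (- del a0) - dbar 0)"
    proof -
      have "del (res U1 (U0 \<inter> U1) a1 - res U0 (U0 \<inter> U1) a0 - del h)
          = res U1 (U0 \<inter> U1) (del a1) - res U0 (U0 \<inter> U1) (del a0)"
        by (simp only: F(8) F(14) F(17)[OF sub1 h(3)] F(17)[OF sub0 h(1)] diff_zero)
      then show ?thesis unfolding z
        by (simp add: F(6) F(14) F(16) F(13) F(11) F(22) F(21) F(10))
    qed
    moreover have "- del a0 \<in> E U0 (p + 1) (q - 1)" "- del a1 \<in> E U1 (p + 1) (q - 1)"
      using F(3,4) h by auto
    moreover have "(0::'f) \<in> E (U0 \<inter> U1) (p + 1) (q - 2)" using F(1) by auto
    ultimately show "z \<in> D_coboundaries E res dbar U0 U1 (p + 1) q"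
      unfolding D_coboundaries_def by blast
  next
    fix x y assume "x \<in> A_cocycles E res del dbar U0 U1 p q" "y \<in> A_cocycles E res del dbar U0 U1 p q"
    then show "(\<lambda>(x0, x1, y1, y2). (del x0, del x1, - del y1)) (x + y) =
       (\<lambda>(x0, x1, y1, y2). (del x0, del x1, - del y1)) x + (\<lambda>(x0, x1, y1, y2). (del x0, del x1, - del y1)) y"
      using F(6) by (cases x; cases y) (auto simp: algebra_simps)
  qed
  have P2: "induces_hom del (A_ker E del dbar p q) (A_im E del dbar p q)
        (Dol_ker E dbar (p + 1) q) (Dol_im E dbar (p + 1) q)"
    unfolding induces_hom_def
  proof (intro conjI ballI subsetI)
    fix z assume "z \<in> del ` A_ker E del dbar p q"
    then show "z \<in> Dol_ker E dbar (p + 1) q" unfolding A_ker_def Dol_ker_def using F(4) by auto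
  next
    fix z assume "z \<in> del ` A_im E del dbar p q"
    then obtain a b where z: "z = del (dbar a + del b)" and h: "a \<in> E UNIV p (q - 1)"
      unfolding A_im_def by auto
    have "z = dbar (- del a)" unfolding z using F(6,11,14,16) by simp
    moreover have "- del a \<in> E UNIV (p + 1) (q - 1)" using F(3,4) h by auto
    ultimately show "z \<in> Dol_im E dbar (p + 1) q" unfolding Dol_im_def by auto
  next
    fix x y show "del (x + y) = del x + del y" by (fact F(6))
  qed
  have P3: "\<forall>w \<in> A_ker E del dbar p q.
          (\<lambda>(x0, x1, y1, y2). (del x0, del x1, - del y1))
             (res UNIV U0 w, res UNIV U1 w, 0, 0::'f)
          - (res UNIV U0 (del w), res UNIV U1 (del w), 0)
          \<in> D_coboundaries E res dbar U0 U1 (p + 1) q"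
  proof
    fix w assume "w \<in> A_ker E del dbar p q"
    then have w: "w \<in> E UNIV p q" unfolding A_ker_def by auto
    have "(\<lambda>(x0, x1, y1, y2). (del x0, del x1, - del y1))
             (res UNIV U0 w, res UNIV U1 w, 0, 0::'f)
          - (res UNIV U0 (del w), res UNIV U1 (del w), 0)
        = (dbar 0, dbar 0, res U1 (U0 \<inter> U1) 0 - res U0 (U0 \<inter> U1) 0 - dbar 0)"
      using F(17)[OF _ w, of U0] F(17)[OF _ w, of U1] F(12,13,23) by (simp add: zero_prod_def)
    moreover have "(0::'f) \<in> E U0 (p + 1) (q - 1)" "(0::'f) \<in> E U1 (p + 1) (q - 1)"
      "(0::'f) \<in> E (U0 \<inter> U1) (p + 1) (q - 2)" using F(1) by auto
    ultimately show "(\<lambda>(x0, x1, y1, y2). (del x0, del x1, - del y1))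
             (res UNIV U0 w, res UNIV U1 w, 0, 0::'f)
          - (res UNIV U0 (del w), res UNIV U1 (del w), 0)
          \<in> D_coboundaries E res dbar U0 U1 (p + 1) q"
      unfolding D_coboundaries_def by blast
  qed
  have P4: "induces_hom (\<lambda>(x1, y1, y2). (del x1, - del y1))
            (A_rel_cocycles E res del dbar U0 U1 p q) (A_rel_coboundaries E res del dbar U0 U1 p q)
            (D_rel_cocycles E res dbar U0 U1 (p + 1) q) (D_rel_coboundaries E res dbar U0 U1 (p + 1) q)"
    unfolding induces_hom_def
  proof (intro conjI ballI subsetI)
    fix z assume "z \<in> (\<lambda>(x1, y1, y2). (del x1, - del y1)) ` A_rel_cocycles E res del dbar U0 U1 p q"
    then obtain x1 y1 y2 where z: "z = (del x1, - del y1)"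
      and h: "x1 \<in> E U1 p q" "y1 \<in> E (U0 \<inter> U1) p (q - 1)"
        "y2 \<in> E (U0 \<inter> U1) (p - 1) q" "dbar (del x1) = 0"
        "res U1 (U0 \<inter> U1) x1 - dbar y1 - del y2 = 0"
      unfolding A_rel_cocycles_def by auto
    have e: "res U1 (U0 \<inter> U1) x1 = dbar y1 + del y2" using h(5)
      by (simp add: algebra_simps)
    have "res U1 (U0 \<inter> U1) (del x1) - dbar (- del y1)
        = del (res U1 (U0 \<inter> U1) x1) + dbar (del y1)"
      using F(17)[OF sub1 h(1)] F(11) by simp
    also have "\<dots> = 0" unfolding e using F(6) F(14) F(16) by simp
    finally show "z \<in> D_rel_cocycles E res dbar U0 U1 (p + 1) q"
      unfolding z D_rel_cocycles_def using h F(3,4) by auto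
  next
    fix z assume "z \<in> (\<lambda>(x1, y1, y2). (del x1, - del y1)) ` A_rel_coboundaries E res del dbar U0 U1 p q"
    then obtain a1 b1 h where z: "z = (del (dbar a1 + del b1),
         - del (res U1 (U0 \<inter> U1) a1 - del h))"
      and h: "a1 \<in> E U1 p (q - 1)"
       "b1 \<in> E U1 (p - 1) q" "h \<in> E (U0 \<inter> U1) (p - 1) (q - 1)"
      unfolding A_rel_coboundaries_def by auto
    have "z = (dbar (- del a1), res U1 (U0 \<inter> U1) (- del a1) - dbar 0)"
    proof -
      have "del (res U1 (U0 \<inter> U1) a1 - del h)
          = res U1 (U0 \<inter> U1) (del a1)"
        by (simp only: F(8) F(14) F(17)[OF sub1 h(1)] diff_zero)
      then show ?thesis unfolding z
        by (simp add: F(6) F(14) F(16) F(13) F(11) F(22) F(10))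
    qed
    moreover have "- del a1 \<in> E U1 (p + 1) (q - 1)"
      using F(3,4) h by auto
    moreover have "(0::'f) \<in> E (U0 \<inter> U1) (p + 1) (q - 2)" using F(1) by auto
    ultimately show "z \<in> D_rel_coboundaries E res dbar U0 U1 (p + 1) q"
      unfolding D_rel_coboundaries_def by blast
  next
    fix x y assume "x \<in> A_rel_cocycles E res del dbar U0 U1 p q" "y \<in> A_rel_cocycles E res del dbar U0 U1 p q"
    then show "(\<lambda>(x1, y1, y2). (del x1, - del y1)) (x + y) =
       (\<lambda>(x1, y1, y2). (del x1, - del y1)) x + (\<lambda>(x1, y1, y2). (del x1, - del y1)) y"
      using F(6) by (cases x; cases y) (auto simp: algebra_simps)
  qed
  show ?thesis using P1 P2 P3 P4 by blast
qed

end
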